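(* Let $(i^*_k,j^*_k)$ and $\mu_k$, $k=1,\dots,n$, be a sequence of $k$-th order bottleneck edges and robustness margins for the weights $w_{i,j}=d(p_i(0),g_j)$, and let $\Pi^*$ be a sequential bottleneck optimising assignment for this sequence. Let $\mu=\min_{k\in\{1,\dots,n\}}\mu_k$ and suppose there is $s$ with $s\ge s_{i,i'}$ for all distinct $i,i'\in\mathcal A$ and $s<\mu$. Define $A_k=\min_{l\in\{1,\dots,k\}}\big(w_{i^*_l,j^*_l}+\mu_l\big)-\tfrac12(\mu+s)$ for $k=1,\dots,n$. Let $a:[0,T]\to\mathbb R$ satisfy $a(t)\ge\tfrac12(\mu-s)$ for all $t$. Set $a_{i^*_k}(t)=\min\{a(t),A_k\}$ for $k=1,\dots,n$, $a_{i'}(t)=a_{i^*_n}(t)$ for every $i'\in\mathcal A\setminus\{i^*_1,\dots,i^*_n\}$, and $b_{j^*_k}(t)=A_k-a_{i^*_k}(t)+\tfrac12(\mu-s)$ for $k=1,\dots,n$. Suppose that for all $t\in[0,T]$: $d(p_i(0),p_i(t))<a_i(t)$ for every $i\in\mathcal A$, and $d(p_{i^*_k}(t),g_{j^*_k})<b_{j^*_k}(t)$ for every $k\in\{1,\dots,n\}$. Then for every $k\in\{1,\dots,n\}$, every $i'\in\mathcal A\setminus\{i^*_k\}$ and every $t\in[0,T]$, agents $i^*_k$ and $i'$ do not collide at time $t$, i.e. $d(p_{i^*_k}(t),p_{i'}(t))>s_{i^*_k,i'}$.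
   Context: Let $\mathcal A$ be a finite set of agents with $|\mathcal A|=m>1$ and $\mathcal T$ a finite set of tasks with $m\ge|\mathcal T|=n\ge 1$. Let $d:\mathbb R^{n_p}\times\mathbb R^{n_p}\to[0,\infty)$ be a distance function that is symmetric and satisfies the triangle inequality. Each agent $i\in\mathcal A$ has a position $p_i(t)\in\mathbb R^{n_p}$ for $t\in[0,T]$, each task $j\in\mathcal T$ has a destination $g_j\in\mathbb R^{n_p}$, and for $i\ne i'$ a safety distance $s_{i,i'}=s_{i',i}\ge 0$ is given; agents $i\ne i'$ do not collide at time $t$ if $d(p_i(t),p_{i'}(t))>s_{i,i'}$. The assignment weights are $\mathcal W=\{w_{i,j}=d(p_i(0),g_j)\}$. An assignment is a family $\Pi=\{\pi_{i,j}\in\{0,1\}:(i,j)\in\mathcal A\times\mathcal T\}$. For $\bar{\mathcal A}\subseteq\mathcal A$, $\bar{\mathcal T}\subseteq\mathcal T$ and $\hat{\mathcal E}\subseteq\bar{\mathcal A}\times\bar{\mathcal T}$, $\mathcal P_{\bar{\mathcal A},\bar{\mathcal T}}(\hat{\mathcal E})$ is the set of assignments with $\sum_{i:(i,j)\in\hat{\mathcal E}}\pi_{i,j}=1$ for every $j\in\bar{\mathcal T}$ and $\sum_{j:(i,j)\in\hat{\mathcal E}}\pi_{i,j}\le 1$ for every $i\in\bar{\mathcal A}$. Define $b(\Pi,\hat{\mathcal E})=\max_{(i,j)\in\hat{\mathcal E}}\pi_{i,j}w_{i,j}$; $B_{\bar{\mathcal A},\bar{\mathcal T}}(\hat{\mathcal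 E})=\min_{\Pi\in\mathcal P_{\bar{\mathcal A},\bar{\mathcal T}}(\hat{\mathcal E})}b(\Pi,\hat{\mathcal E})$ (with $\min\emptyset=+\infty$); $\mathcal B_{\bar{\mathcal A},\bar{\mathcal T}}(\hat{\mathcal E})$ the set of minimisers; $E_{\bar{\mathcal A},\bar{\mathcal T}}(\hat{\mathcal E})=\{(i,j)\in\hat{\mathcal E}: w_{i,j}=B_{\bar{\mathcal A},\bar{\mathcal T}}(\hat{\mathcal E})\}$. For $\bar{\mathcal E}=\bar{\mathcal A}\times\bar{\mathcal T}$ with $|\bar{\mathcal E}|>1$: $e_{\bar{\mathcal A},\bar{\mathcal T}}=\arg\max_{(i,j)\in E_{\bar{\mathcal A},\bar{\mathcal T}}(\bar{\mathcal E})}B_{\bar{\mathcal A},\bar{\mathcal T}}(\bar{\mathcal E}\setminus\{(i,j)\})$ and $r_{\bar{\mathcal A},\bar{\mathcal T}}=\max_{(i,j)\in E_{\bar{\mathcal A},\bar{\mathcal T}}(\bar{\mathcal E})}\big(B_{\bar{\mathcal A},\bar{\mathcal T}}(\bar{\mathcal E}\setminus\{(i,j)\})-w_{i,j}\big)$; if $|\bar{\mathcal E}|=1$, $e_{\bar{\mathcal A},\bar{\mathcal T}}=\bar{\mathcal E}$ and $r_{\bar{\mathcal A},\bar{\mathcal T}}=\infty$. Sequential bottleneck assignment: $\bar{\mathcal A}_1=\mathcal A$, $\bar{\mathcal T}_1=\mathcal T$; for $k=1,\dots,n$, $\bar{\mathcal E}_k=\bar{\mathcal A}_k\times\bar{\mathcal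 T}_k$, choose $(i^*_k,j^*_k)\in e_{\bar{\mathcal A}_k,\bar{\mathcal T}_k}$, set $\mu_k=r_{\bar{\mathcal A}_k,\bar{\mathcal T}_k}$, $\bar{\mathcal A}_{k+1}=\bar{\mathcal A}_k\setminus\{i^*_k\}$, $\bar{\mathcal T}_{k+1}=\bar{\mathcal T}_k\setminus\{j^*_k\}$. Given these choices, $\Pi^*$ is sequential bottleneck optimising if $\Pi^*\in\mathcal B_{\bar{\mathcal A}_k,\bar{\mathcal T}_k}(\bar{\mathcal E}_k)$ for all $k$. *)

theory Defs
  imports "HOL-Analysis.Analysis" "HOL-Library.Extended_Real"
begin

definition assignments :: "'a set \<Rightarrow> 'b set \<Rightarrow> ('a \<times> 'b) set \<Rightarrow> ('a \<Rightarrow> 'b \<Rightarrow> nat) set" where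
  "assignments Ab Tb Eh = {asg. (\<forall>i j. asg i j \<in> {0,1})
      \<and> (\<forall>j\<in>Tb. (\<Sum>i\<in>{i. (i,j)\<in>Eh}. asg i j) = 1)
      \<and> (\<forall>i\<in>Ab. (\<Sum>j\<in>{j. (i,j)\<in>Eh}. asg i j) \<le> 1)}"

definition bval :: "('a \<Rightarrow> 'b \<Rightarrow> real) \<Rightarrow> ('a \<Rightarrow> 'b \<Rightarrow> nat) \<Rightarrow> ('a \<times> 'b) set \<Rightarrow> real" where
  "bval W asg Eh = Max ((\<lambda>(i,j). real (asg i j) * W i j) ` Eh)"

text \<open>Bottleneck value B (min over the empty set is +infinity).\<close>
definition Bval :: "('a \<Rightarrow> 'b \<Rightarrow> real) \<Rightarrow> 'a set \<Rightarrow> 'b set \<Rightarrow> ('a \<times> 'b) set \<Rightarrow> ereal" where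
  "Bval W Ab Tb Eh = Inf ((\<lambda>asg. ereal (bval W asg Eh)) ` assignments Ab Tb Eh)"

definition Bset :: "('a \<Rightarrow> 'b \<Rightarrow> real) \<Rightarrow> 'a set \<Rightarrow> 'b set \<Rightarrow> ('a \<times> 'b) set \<Rightarrow> ('a \<Rightarrow> 'b \<Rightarrow> nat) set" where
  "Bset W Ab Tb Eh = {asg \<in> assignments Ab Tb Eh. ereal (bval W asg Eh) = Bval W Ab Tb Eh}"

definition Eset :: "('a \<Rightarrow> 'b \<Rightarrow> real) \<Rightarrow> 'a set \<Rightarrow> 'b set \<Rightarrow> ('a \<times> 'b) set \<Rightarrow> ('a \<times> 'b) set" where
  "Eset W Ab Tb Eh = {(i,j) \<in> Eh. ereal (W i j) = Bval W Ab Tb Eh}"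

definition bedges :: "('a \<Rightarrow> 'b \<Rightarrow> real) \<Rightarrow> 'a set \<Rightarrow> 'b set \<Rightarrow> ('a \<times> 'b) set" where
  "bedges W Ab Tb = (let Eb = Ab \<times> Tb in
     if card Eb > 1 then
       {x \<in> Eset W Ab Tb Eb. \<forall>y \<in> Eset W Ab Tb Eb.
          Bval W Ab Tb (Eb - {y}) \<le> Bval W Ab Tb (Eb - {x})}
     else Eb)"

definition rmargin :: "('a \<Rightarrow> 'b \<Rightarrow> real) \<Rightarrow> 'a set \<Rightarrow> 'b set \<Rightarrow> ereal" where
  "rmargin W Ab Tb = (let Eb = Ab \<times> Tb in
     if card Eb > 1 then
       Max ((\<lambda>(i,j). Bval W Ab Tb (Eb - {(i,j)}) - ereal (W i j)) ` Eset W Ab Tb Eb)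
     else \<infinity>)"

end

theory Submission imports Defs begin

lemma two_ones:
  fixes f :: "'x \<Rightarrow> nat"
  assumes "finite S" "x \<in> S" "y \<in> S" "x \<noteq> y" "f x = 1" "f y = 1"
  shows "sum f S \<ge> 2"
proof -
  have "sum f {x,y} \<le> sum f S" by (rule sum_mono2) (use assms in auto)
  moreover have "sum f {x,y} = 2" using assms by simp
  ultimately show ?thesis by simp
qed

lemma assign_remove:
  assumes "asg \<in> assignments A T E" "asg i0 j0 = 0" "finite E"
  shows "asg \<in> assignments A T (E - {(i0,j0)})"
proof -
  have fin1: "finite {i. (i,j) \<in> E}" for j
    by (rule finite_subset[of _ "fst ` E"]) (use assms(3) in force)+
  have fin2: "finite {j. (i,j) \<in> E}" for i
    by (rule finite_subset[of _ "snd ` E"]) (use assms(3) in force)+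
  have c: "(\<Sum>i\<in>{i. (i,j) \<in> E - {(i0,j0)}}. asg i j) = (\<Sum>i\<in>{i. (i,j) \<in> E}. asg i j)" for j
    by (rule sum.mono_neutral_left) (use fin1 assms(2) in auto)
  have r: "(\<Sum>j\<in>{j. (i,j) \<in> E - {(i0,j0)}}. asg i j) = (\<Sum>j\<in>{j. (i,j) \<in> E}. asg i j)" for i
    by (rule sum.mono_neutral_left) (use fin2 assms(2) in auto)
  show ?thesis using assms(1) unfolding assignments_def mem_Collect_eq c r by blast
qed

lemma Bval_le:
  assumes "asg \<in> assignments A T E"
  shows "Bval W A T E \<le> ereal (bval W asg E)"
  unfolding Bval_def by (rule Inf_lower) (use assms in auto)

lemma bval_ge:
  assumes "finite E" "(i,j) \<in> E"
  shows "real (asg i j) * W i j \<le> bval W asg E"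
  unfolding bval_def by (rule Max_ge) (use assms in force)+

lemma bval_attained:
  assumes "finite E" "E \<noteq> {}"
  obtains i j where "(i,j) \<in> E" "bval W asg E = real (asg i j) * W i j"
proof -
  have "bval W asg E \<in> (\<lambda>(i,j). real (asg i j) * W i j) ` E"
    unfolding bval_def by (rule Max_in) (use assms in auto)
  then show ?thesis using that by auto
qed

lemma bval_mono:
  assumes "finite E" "E' \<subseteq> E" "E' \<noteq> {}"
  shows "bval W asg E' \<le> bval W asg E"
  unfolding bval_def by (rule Max_mono) (use assms in auto)

lemma assign_swap:
  assumes "asg \<in> assignments A T (A \<times> T)" "i1 \<in> A" "i2 \<in> A" "finite A" "finite T"
  shows "(\<lambda>i j. asg (Transposition.transpose i1 i2 i) j) \<in> assignments A T (A \<times> T)"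
proof -
  let ?s = "Transposition.transpose i1 i2"
  have img: "?s ` A = A" using assms(2,3) by (auto simp: Transposition.transpose_def image_iff) 
  have col: "(\<Sum>i\<in>A. asg (?s i) j) = (\<Sum>i\<in>A. asg i j)" for j
  proof -
    have "(\<Sum>i\<in>A. asg (?s i) j) = (\<Sum>i\<in>?s ` A. asg i j)"
      by (subst sum.reindex) (auto simp: inj_on_transpose)
    then show ?thesis using img by simp
  qed
  have sA: "?s i \<in> A" if "i \<in> A" for i using that img by blast
  show ?thesis using assms(1) sA unfolding assignments_def by (auto simp: col)
qed

lemma stage_mu:
  assumes "finite A" "finite T" "card (A \<times> T) > 1" "(i0,j0) \<in> bedges W A T"
  shows "(i0,j0) \<in> Eset W A T (A \<times> T)"
    "rmargin W A T = Bval W A T (A \<times> T - {(i0,j0)}) - ereal (W i0 j0)"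
proof -
  let ?E = "A \<times> T"
  have b: "(i0,j0) \<in> Eset W A T ?E \<and> (\<forall>y \<in> Eset W A T ?E. Bval W A T (?E - {y}) \<le> Bval W A T (?E - {(i0,j0)}))"
    using assms(3,4) unfolding bedges_def Let_def by auto
  then show e: "(i0,j0) \<in> Eset W A T (A \<times> T)" by blast
  have fin: "finite (Eset W A T ?E)" unfolding Eset_def
    by (rule finite_subset[of _ ?E]) (use assms(1,2) in auto)
  have r: "rmargin W A T = Max ((\<lambda>(i,j). Bval W A T (?E - {(i,j)}) - ereal (W i j)) ` Eset W A T ?E)"
    using assms(3) unfolding rmargin_def Let_def by simp
  show "rmargin W A T = Bval W A T (A \<times> T - {(i0,j0)}) - ereal (W i0 j0)"
    unfolding r
  proof (rule Max_eqI)
    show "finite ((\<lambda>(i,j). Bval W A T (?E - {(i,j)}) - ereal (W i j)) ` Eset W A T ?E)" using fin by simp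
    show "Bval W A T (A \<times> T - {(i0,j0)}) - ereal (W i0 j0) \<in> (\<lambda>(i,j). Bval W A T (?E - {(i,j)}) - ereal (W i j)) ` Eset W A T ?E"
      using e by force
    fix y assume "y \<in> (\<lambda>(i,j). Bval W A T (?E - {(i,j)}) - ereal (W i j)) ` Eset W A T ?E"
    then obtain i j where ij: "(i,j) \<in> Eset W A T ?E" "y = Bval W A T (?E - {(i,j)}) - ereal (W i j)" by auto
    have "ereal (W i j) = ereal (W i0 j0)" using ij(1) e unfolding Eset_def by auto
    then have "W i j = W i0 j0" by simp
    moreover have "Bval W A T (?E - {(i,j)}) \<le> Bval W A T (?E - {(i0,j0)})" using b ij(1) by blast
    ultimately show "y \<le> Bval W A T (A \<times> T - {(i0,j0)}) - ereal (W i0 j0)"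
      using ij(2) by (auto intro: ereal_minus_mono)
  qed
qed

lemma lin_aux: fixes w m gd D Al b ml mr s :: real
  assumes "b + ml \<le> w" "w \<le> m + D + gd" "m + gd < Al + (mr - s)/2" "Al \<le> b + ml - (mr+s)/2" shows "s < D"
proof -
  have e: "(mr - s)/2 = (mr + s)/2 - s" by (simp add: field_simps)
  show ?thesis using assms unfolding e by linarith
qed

lemma lin2: fixes x y ma mb ak al c :: real
  shows "x < ma \<Longrightarrow> y < ak - mb + c \<Longrightarrow> ma + (ak - mb) \<le> al \<Longrightarrow> x + y < al + c"
  by linarith

lemma ereal_min_real: "min (ereal x) (ereal y) = ereal (min x y)" by (simp add: min_def)


theorem theorem1:
  fixes Ag :: "'a set" and Tk :: "'b set"
    and d :: "real^'n \<Rightarrow> real^'n \<Rightarrow> real"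
    and p :: "'a \<Rightarrow> real \<Rightarrow> real^'n" and g :: "'b \<Rightarrow> real^'n"
    and ss :: "'a \<Rightarrow> 'a \<Rightarrow> real" and T :: real
    and ist :: "nat \<Rightarrow> 'a" and jst :: "nat \<Rightarrow> 'b" and mu :: "nat \<Rightarrow> ereal"
    and PiS :: "'a \<Rightarrow> 'b \<Rightarrow> nat"
    and s :: real and a :: "real \<Rightarrow> real"
    and n :: nat and W :: "'a \<Rightarrow> 'b \<Rightarrow> real"
    and Abar :: "nat \<Rightarrow> 'a set" and Tbar :: "nat \<Rightarrow> 'b set"
    and \<mu> :: ereal and Ak :: "nat \<Rightarrow> ereal"
  assumes n_def: "n = card Tk"
    and W_def: "W = (\<lambda>i j. d (p i 0) (g j))"
    and Abar_def: "Abar = (\<lambda>k. Ag - ist ` {1..<k})"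
    and Tbar_def: "Tbar = (\<lambda>k. Tk - jst ` {1..<k})"
    and mu_min_def: "\<mu> = Min (mu ` {1..n})"
    and Ak_def: "Ak = (\<lambda>k. Min ((\<lambda>l. ereal (W (ist l) (jst l)) + mu l) ` {1..k}) - (\<mu> + ereal s) / 2)"
    and finA: "finite Ag" and finT: "finite Tk"
    and m_gt1: "card Ag > 1" and n_le: "card Tk \<le> card Ag" and n_ge1: "card Tk \<ge> 1"
    and d_nonneg: "\<forall>x y. d x y \<ge> 0"
    and d_sym: "\<forall>x y. d x y = d y x"
    and d_tri: "\<forall>x y z. d x z \<le> d x y + d y z"
    and ss_sym: "\<forall>i i'. i \<noteq> i' \<longrightarrow> ss i i' = ss i' i"
    and ss_nonneg: "\<forall>i i'. i \<noteq> i' \<longrightarrow> ss i i' \<ge> 0"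
    and seq: "\<forall>k\<in>{1..n}. (ist k, jst k) \<in> bedges W (Abar k) (Tbar k)
                        \<and> mu k = rmargin W (Abar k) (Tbar k)"
    and PiS_opt: "\<forall>k\<in>{1..n}. PiS \<in> Bset W (Abar k) (Tbar k) (Abar k \<times> Tbar k)"
    and s_ge: "\<forall>i\<in>Ag. \<forall>i'\<in>Ag. i \<noteq> i' \<longrightarrow> ss i i' \<le> s"
    and s_lt: "ereal s < \<mu>"
    and a_ge: "\<forall>t\<in>{0..T}. ereal (a t) \<ge> (\<mu> - ereal s) / 2"
    and move_assigned: "\<forall>k\<in>{1..n}. \<forall>t\<in>{0..T}.
          ereal (d (p (ist k) 0) (p (ist k) t)) < min (ereal (a t)) (Ak k)"
    and move_other: "\<forall>i\<in>Ag - ist ` {1..n}. \<forall>t\<in>{0..T}.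
          ereal (d (p i 0) (p i t)) < min (ereal (a t)) (Ak n)"
    and goal_dist: "\<forall>k\<in>{1..n}. \<forall>t\<in>{0..T}.
          ereal (d (p (ist k) t) (g (jst k)))
            < Ak k - min (ereal (a t)) (Ak k) + (\<mu> - ereal s) / 2"
  shows "\<forall>k\<in>{1..n}. \<forall>i'\<in>Ag - {ist k}. \<forall>t\<in>{0..T}.
           d (p (ist k) t) (p i' t) > ss (ist k) i'"
proof (intro ballI)
  fix k0 i0 t assume k0: "k0 \<in> {1..n}" and i0: "i0 \<in> Ag - {ist k0}" and t: "t \<in> {0..T}"
  have Wd: "W i j = d (p i 0) (g j)" for i j using W_def by simp
  have W0: "W i j \<ge> 0" for i j using Wd d_nonneg by simp
  obtain x y where xy: "x \<in> Ag" "y \<in> Ag" "x \<noteq> y"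
  proof -
    have "\<not> card Ag \<le> Suc 0" using m_gt1 by simp
    then show ?thesis using that card_le_Suc0_iff_eq[OF finA] by blast
  qed
  have s0: "s \<ge> 0" using ss_nonneg s_ge xy by (meson order_trans)
  have aget: "(\<mu> - ereal s) / 2 \<le> ereal (a t)" using a_ge t by blast
  obtain mr where mr: "\<mu> = ereal mr"
  proof (cases \<mu>)
    case (real r) then show ?thesis using that by blast
  next
    case PInf then show ?thesis using aget by simp
  next
    case MInf then show ?thesis using s_lt by simp
  qed
  have mrs: "s < mr" using s_lt mr by simp
  have mu_ge: "mu l \<ge> ereal mr" if "l \<in> {1..n}" for l
  proof -
    have "Min (mu ` {1..n}) \<le> mu l" by (rule Min_le) (use that in auto)
    then show ?thesis using mr mu_min_def by simp
  qed
  have mu_pos: "mu l > 0" if "l \<in> {1..n}" for l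
  proof -
    have "0 < ereal mr" using mrs s0 by simp
    then show ?thesis using mu_ge[OF that] by (rule less_le_trans)
  qed
  have finAb: "finite (Abar l)" "finite (Tbar l)" for l using finA finT Abar_def Tbar_def by auto
  have bed: "(ist l, jst l) \<in> Abar l \<times> Tbar l" if "l \<in> {1..n}" for l
  proof -
    have "(ist l, jst l) \<in> bedges W (Abar l) (Tbar l)" using seq that by blast
    then show ?thesis unfolding bedges_def Let_def Eset_def by (auto split: if_splits)
  qed
  have istA: "ist l \<in> Abar l" and jstT: "jst l \<in> Tbar l" if "l \<in> {1..n}" for l using bed[OF that] by auto
  have Abar_mono: "Abar k \<subseteq> Abar l" if "l \<le> k" for k l using that Abar_def by auto
  have ist_inj: "l = k" if "l \<in> {1..n}" "k \<in> {1..n}" "ist l = ist k" for l k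
  proof (rule ccontr)
    assume "l \<noteq> k"
    then consider "l < k" | "k < l" by linarith
    then show False
    proof cases
      case 1
      have "ist l \<in> ist ` {1..<k}" by (rule image_eqI[of _ _ l]) (use that 1 in auto)
      then show False using istA[OF that(2)] that Abar_def by auto
    next
      case 2
      have "ist k \<in> ist ` {1..<l}" by (rule image_eqI[of _ _ k]) (use that 2 in auto)
      then show False using istA[OF that(1)] that Abar_def by auto
    qed
  qed
  have jst_inj: "l = k" if "l \<in> {1..n}" "k \<in> {1..n}" "jst l = jst k" for l k
  proof (rule ccontr)
    assume "l \<noteq> k"
    then consider "l < k" | "k < l" by linarith
    then show False
    proof cases
      case 1
      have "jst l \<in> jst ` {1..<k}" by (rule image_eqI[of _ _ l]) (use that 1 in auto)
      then show False using jstT[OF that(2)] that Tbar_def by auto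
    next
      case 2
      have "jst k \<in> jst ` {1..<l}" by (rule image_eqI[of _ _ k]) (use that 2 in auto)
      then show False using jstT[OF that(1)] that Tbar_def by auto
    qed
  qed
  have Tk_eq: "Tk = jst ` {1..n}"
  proof -
    have sub: "jst ` {1..n} \<subseteq> Tk" using jstT Tbar_def by auto
    have "card (jst ` {1..n}) = n" using jst_inj by (subst card_image) (auto simp: inj_on_def)
    then show ?thesis using card_subset_eq[OF finT sub] n_def by simp
  qed
  have PiS_asg: "PiS \<in> assignments (Abar l) (Tbar l) (Abar l \<times> Tbar l)" if "l \<in> {1..n}" for l
  proof -
    have "PiS \<in> Bset W (Abar l) (Tbar l) (Abar l \<times> Tbar l)" using PiS_opt that by blast
    then show ?thesis by (simp add: Bset_def)
  qed
  have colsum: "(\<Sum>i\<in>Abar l. PiS i j) = 1" if "l \<in> {1..n}" "j \<in> Tbar l" for l j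
    using PiS_asg[OF that(1)] that(2) unfolding assignments_def by auto
  have rowsum: "(\<Sum>j\<in>Tbar l. PiS i j) \<le> 1" if "l \<in> {1..n}" "i \<in> Abar l" for l i
    using PiS_asg[OF that(1)] that(2) unfolding assignments_def by auto
  have PiS01: "PiS i j = 0 \<or> PiS i j = 1" for i j
    using PiS_asg[of 1] n_def n_ge1 unfolding assignments_def by auto
  have Bv: "ereal (W (ist l) (jst l)) = Bval W (Abar l) (Tbar l) (Abar l \<times> Tbar l)"
    and mu_eq: "mu l = Bval W (Abar l) (Tbar l) (Abar l \<times> Tbar l - {(ist l, jst l)}) - ereal (W (ist l) (jst l))"
    if "l \<in> {1..n}" "card (Abar l \<times> Tbar l) > 1" for l
  proof -
    have sq: "(ist l, jst l) \<in> bedges W (Abar l) (Tbar l) \<and> mu l = rmargin W (Abar l) (Tbar l)"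
      using seq that(1) by blast
    show "ereal (W (ist l) (jst l)) = Bval W (Abar l) (Tbar l) (Abar l \<times> Tbar l)"
      using stage_mu(1)[OF finAb(1) finAb(2) that(2) conjunct1[OF sq]] unfolding Eset_def by auto
    show "mu l = Bval W (Abar l) (Tbar l) (Abar l \<times> Tbar l - {(ist l, jst l)}) - ereal (W (ist l) (jst l))"
      using stage_mu(2)[OF finAb(1) finAb(2) that(2) conjunct1[OF sq]] sq by simp
  qed
  have PiS_bval: "bval W PiS (Abar l \<times> Tbar l) = W (ist l) (jst l)" if "l \<in> {1..n}" "card (Abar l \<times> Tbar l) > 1" for l
  proof -
    have "PiS \<in> Bset W (Abar l) (Tbar l) (Abar l \<times> Tbar l)" using PiS_opt that by blast
    then have "ereal (bval W PiS (Abar l \<times> Tbar l)) = Bval W (Abar l) (Tbar l) (Abar l \<times> Tbar l)"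
      unfolding Bset_def by blast
    then show ?thesis using Bv[OF that] by (metis ereal.inject)
  qed
  have diag: "PiS (ist l) (jst l) = 1" if l: "l \<in> {1..n}" for l
  proof (cases "card (Abar l \<times> Tbar l) > 1")
    case True
    let ?E = "Abar l \<times> Tbar l" and ?e = "(ist l, jst l)"
    show ?thesis
    proof (rule ccontr)
      assume "PiS (ist l) (jst l) \<noteq> 1"
      then have z: "PiS (ist l) (jst l) = 0" using PiS01 by blast
      have finE: "finite ?E" using finAb by simp
      have ne: "?E - {?e} \<noteq> {}"
      proof
        assume "?E - {?e} = {}"
        then have "?E \<subseteq> {?e}" by blast
        then have "card ?E \<le> 1" using card_mono[of "{?e}" ?E] by simp
        then show False using True by simp
      qed
      have "PiS \<in> assignments (Abar l) (Tbar l) (?E - {?e})"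
        using assign_remove[OF PiS_asg[OF l] z finE] .
      then have "Bval W (Abar l) (Tbar l) (?E - {?e}) \<le> ereal (bval W PiS (?E - {?e}))" by (rule Bval_le)
      also have "\<dots> \<le> ereal (bval W PiS ?E)" using bval_mono[OF finE _ ne] by simp
      also have "\<dots> = ereal (W (ist l) (jst l))" using PiS_bval[OF l True] by simp
      finally have "mu l \<le> 0" using mu_eq[OF l True]
        by (cases "Bval W (Abar l) (Tbar l) (?E - {?e})") auto
      then show False using mu_pos[OF l] by simp
    qed
  next
    case False
    then have "Abar l \<times> Tbar l = {(ist l, jst l)}"
      using bed[OF l] card_le_Suc0_iff_eq[of "Abar l \<times> Tbar l"] finAb by auto
    then have "Abar l = {ist l}" "Tbar l = {jst l}" by auto
    then show ?thesis using colsum[OF l jstT[OF l]] by simp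
  qed
  have key: "ereal (W (ist l) (jst l)) + mu l \<le> ereal (W i' (jst l))
     \<or> (\<exists>k\<in>{1..n}. l < k \<and> i' = ist k \<and> ereal (W (ist l) (jst l)) + mu l \<le> ereal (W (ist l) (jst k)))"
    if l: "l \<in> {1..n}" and i': "i' \<in> Abar l" "i' \<noteq> ist l" for l i'
  proof -
    let ?A = "Abar l" and ?T = "Tbar l"
    let ?E = "?A \<times> ?T" and ?e = "(ist l, jst l)"
    let ?il = "ist l" and ?jl = "jst l"
    have finE: "finite ?E" using finAb by simp
    have e2: "{?e, (i', ?jl)} \<subseteq> ?E" using bed[OF l] i' by auto
    have "card {?e, (i', ?jl)} = 2" using i' by simp
    then have card: "card ?E > 1" using card_mono[OF finE e2] by simp
    have ne: "?E - {?e} \<noteq> {}" using e2 i' by blast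
    define asg' where "asg' = (\<lambda>i j. PiS (Transposition.transpose ?il i' i) j)"
    have as1: "asg' \<in> assignments ?A ?T ?E"
      unfolding asg'_def by (rule assign_swap[OF PiS_asg[OF l] istA[OF l] i'(1) finAb])
    have "PiS i' ?jl \<noteq> 1"
    proof
      assume "PiS i' ?jl = 1"
      then have "sum (\<lambda>i. PiS i ?jl) ?A \<ge> 2"
        using two_ones[OF finAb(1) istA[OF l] i'(1)] i'(2) diag[OF l] by metis
      then show False using colsum[OF l jstT[OF l]] by simp
    qed
    then have "asg' ?il ?jl = 0" using PiS01[of i' ?jl] unfolding asg'_def by simp
    then have as2: "asg' \<in> assignments ?A ?T (?E - {?e})" using assign_remove[OF as1 _ finE] by simp
    obtain i j where ij: "(i,j) \<in> ?E - {?e}" "bval W asg' (?E - {?e}) = real (asg' i j) * W i j"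
      using bval_attained[OF _ ne] finE by blast
    have "ereal (W ?il ?jl) + mu l = Bval W ?A ?T (?E - {?e})"
      using mu_eq[OF l card] by (cases "Bval W ?A ?T (?E - {?e})") auto
    also have "\<dots> \<le> ereal (real (asg' i j) * W i j)" using Bval_le[OF as2, of W] ij(2) by simp
    finally have ch: "ereal (W ?il ?jl) + mu l \<le> ereal (real (asg' i j) * W i j)" .
    have "ereal (W ?il ?jl) < ereal (W ?il ?jl) + mu l"
      using mu_pos[OF l] by (cases "mu l") auto
    then have "ereal (W ?il ?jl) < ereal (real (asg' i j) * W i j)" using ch by (rule less_le_trans)
    then have lt: "W ?il ?jl < real (asg' i j) * W i j" by simp
    have "asg' i j \<noteq> 0" using lt W0[of ?il ?jl] by (metis mult_zero_left of_nat_0 not_less)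
    then have a1: "asg' i j = 1" using PiS01 unfolding asg'_def by metis
    then have ch2: "ereal (W ?il ?jl) + mu l \<le> ereal (W i j)" and lt2: "W ?il ?jl < W i j" using ch lt by simp_all
    have iA: "i \<in> ?A" and jT: "j \<in> ?T" using ij(1) by auto
    show ?thesis
    proof (cases "i = ?il")
      case True
      then have P1: "PiS i' j = 1" using a1 unfolding asg'_def by simp
      have jne: "j \<noteq> ?jl" using lt2 True by auto
      have "j \<in> Tk" using jT Tbar_def by auto
      then obtain k where k: "k \<in> {1..n}" "j = jst k" using Tk_eq by blast
      have "k \<notin> {1..<l}" using jT k Tbar_def by auto
      moreover have "k \<noteq> l" using jne k by auto
      ultimately have lk: "l < k" using k(1) l by auto
      have ikA: "ist k \<in> ?A" using istA[OF k(1)] Abar_mono[of l k] lk by auto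
      have "i' = ist k"
      proof (rule ccontr)
        assume "i' \<noteq> ist k"
        then have "sum (\<lambda>i. PiS i j) ?A \<ge> 2"
          using two_ones[OF finAb(1) ikA i'(1)] diag[OF k(1)] P1 k(2) by metis
        then show False using colsum[OF l jT] by simp
      qed
      then show ?thesis using k lk ch2 True by blast
    next
      case False
      show ?thesis
      proof (cases "i = i'")
        case True
        then have P1: "PiS ?il j = 1" using a1 unfolding asg'_def by simp
        have "j = ?jl"
        proof (rule ccontr)
          assume "j \<noteq> ?jl"
          then have "sum (PiS ?il) ?T \<ge> 2"
            using two_ones[OF finAb(2) jT jstT[OF l]] diag[OF l] P1 by metis
          then show False using rowsum[OF l istA[OF l]] by simp
        qed
        then show ?thesis using ch2 True by blast
      next
        case False2: False
        then have "asg' i j = PiS i j" using False unfolding asg'_def by simp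
        then have "real (PiS i j) * W i j > W ?il ?jl" using lt by simp
        moreover have "real (PiS i j) * W i j \<le> W ?il ?jl"
          using bval_ge[OF finE, where W=W and asg=PiS and i=i and j=j] ij(1) PiS_bval[OF l card] by simp
        ultimately show ?thesis by simp
      qed
    qed
  qed
  define M where "M = (\<lambda>k. Min ((\<lambda>l. ereal (W (ist l) (jst l)) + mu l) ` {1..k}))"
  have AkM: "Ak k = M k - ereal ((mr + s)/2)" for k using Ak_def M_def mr by simp
  have M_lb: "M k \<ge> ereal mr" if "k \<in> {1..n}" for k
  proof -
    have all: "\<forall>a\<in>(\<lambda>l. ereal (W (ist l) (jst l)) + mu l) ` {1..k}. ereal mr \<le> a"
    proof
      fix x assume "x \<in> (\<lambda>l. ereal (W (ist l) (jst l)) + mu l) ` {1..k}"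
      then obtain l where l: "l \<in> {1..k}" "x = ereal (W (ist l) (jst l)) + mu l" by blast
      have "l \<in> {1..n}" using l that by auto
      then have "ereal mr \<le> mu l" by (rule mu_ge)
      also have "\<dots> \<le> ereal (W (ist l) (jst l)) + mu l" using W0 by (simp add: add_increasing)
      finally show "ereal mr \<le> x" using l by simp
    qed
    have ne: "(\<lambda>l. ereal (W (ist l) (jst l)) + mu l) ` {1..k} \<noteq> {}" using that by auto
    show ?thesis unfolding M_def using Min_ge_iff[OF _ ne] all by simp
  qed
  have M_ub: "M k \<le> ereal (W (ist l) (jst l)) + mu l" if "l \<in> {1..k}" for k l
    unfolding M_def by (rule Min_le) (use that in auto)
  have M_mono: "M k \<le> M l" if "1 \<le> l" "l \<le> k" for k l
    unfolding M_def by (rule Min_antimono) (use that in auto)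
  have Ak_lb: "Ak k \<ge> ereal (mr - (mr + s)/2)" if "k \<in> {1..n}" for k
  proof -
    have "ereal mr - ereal ((mr + s)/2) \<le> M k - ereal ((mr + s)/2)"
      by (rule ereal_minus_mono[OF M_lb[OF that] order_refl])
    then show ?thesis unfolding AkM by simp
  qed
  have Ak_mono: "Ak k \<le> Ak l" if "1 \<le> l" "l \<le> k" for k l
    unfolding AkM by (rule ereal_minus_mono[OF M_mono[OF that] order_refl])
  have real_of: "\<exists>r. x = ereal r" if "x \<le> ereal u" "ereal v \<le> x" for x :: ereal and u v
    using that by (cases x) auto
  have dtri: "d x z \<le> d x y + d y z" for x y z using d_tri by blast
  have dsym: "d x y = d y x" for x y using d_sym by blast
  have tl: "t \<in> {0..T}" by (rule t)
  have pair: "d (p (ist l) t) (p i' t) > s" if l: "l \<in> {1..n}" and i': "i' \<in> Abar l" "i' \<noteq> ist l" for l i'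
  proof -
    let ?il = "ist l" and ?jl = "jst l"
    have kk: "ereal (W ?il ?jl) + mu l \<le> ereal (W i' ?jl)
     \<or> (\<exists>k\<in>{1..n}. l < k \<and> i' = ist k \<and> ereal (W ?il ?jl) + mu l \<le> ereal (W ?il (jst k)))"
      by (rule key[OF l i'])
    then obtain u where "ereal (W ?il ?jl) + mu l \<le> ereal u" by blast
    then obtain ml where ml: "mu l = ereal ml" using mu_pos[OF l] by (cases "mu l") auto
    have "M l \<le> ereal (W ?il ?jl + ml)" using M_ub[of l l] l ml by simp
    then have Akub: "Ak l \<le> ereal (W ?il ?jl + ml) - ereal ((mr + s)/2)"
      unfolding AkM by (rule ereal_minus_mono) simp
    then have Akub2: "Ak l \<le> ereal (W ?il ?jl + ml - (mr + s)/2)" by simp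
    obtain Al where Al: "Ak l = ereal Al" using real_of[OF Akub2 Ak_lb[OF l]] by blast
    have Al_ub: "Al \<le> W ?il ?jl + ml - (mr + s)/2"
      using Akub2 unfolding Al by simp
    have c: "(\<mu> - ereal s) / 2 = ereal ((mr - s)/2)" using mr by simp
    have gdl: "d (p ?il t) (g ?jl) < Al - min (a t) Al + (mr - s)/2"
    proof -
      have "ereal (d (p ?il t) (g ?jl)) < Ak l - min (ereal (a t)) (Ak l) + (\<mu> - ereal s) / 2"
        by (rule goal_dist[rule_format, OF l tl])
      then show ?thesis unfolding Al c by (simp add: ereal_min_real del: ereal_min)
    qed
    have mvl: "d (p ?il 0) (p ?il t) < min (a t) Al"
    proof -
      have "ereal (d (p ?il 0) (p ?il t)) < min (ereal (a t)) (Ak l)" by (rule move_assigned[rule_format, OF l tl])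
      then show ?thesis unfolding Al by (simp add: ereal_min_real del: ereal_min)
    qed
    have mvi: "d (p i' 0) (p i' t) < min (a t) Al"
    proof (cases "i' \<in> ist ` {1..n}")
      case True
      then obtain k where k: "k \<in> {1..n}" "i' = ist k" by blast
      have "k \<notin> {1..<l}" using i'(1) k Abar_def by auto
      then have lk: "l \<le> k" using k(1) by auto
      have "ereal (d (p i' 0) (p i' t)) < min (ereal (a t)) (Ak k)" using move_assigned[rule_format, OF k(1) tl] k(2) by simp
      also have "\<dots> \<le> min (ereal (a t)) (Ak l)" using Ak_mono[of l k] lk l by (intro min.mono) auto
      finally show ?thesis unfolding Al by (simp add: ereal_min_real del: ereal_min)
    next
      case False
      then have "i' \<in> Ag - ist ` {1..n}" using i'(1) Abar_def by auto
      then have "ereal (d (p i' 0) (p i' t)) < min (ereal (a t)) (Ak n)" by (rule move_other[rule_format, OF _ tl])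
      also have "\<dots> \<le> min (ereal (a t)) (Ak l)" using Ak_mono[of l n] l by (intro min.mono) auto
      finally show ?thesis unfolding Al by (simp add: ereal_min_real del: ereal_min)
    qed
    show ?thesis
    proof (cases "ereal (W ?il ?jl) + mu l \<le> ereal (W i' ?jl)")
      case True
      then have w: "W ?il ?jl + ml \<le> d (p i' 0) (g ?jl)" using ml Wd by simp
      have "d (p i' 0) (g ?jl) \<le> d (p i' 0) (p i' t) + d (p i' t) (g ?jl)" by (rule dtri)
      moreover have "d (p i' t) (g ?jl) \<le> d (p i' t) (p ?il t) + d (p ?il t) (g ?jl)" by (rule dtri)
      moreover have "d (p i' t) (p ?il t) = d (p ?il t) (p i' t)" by (rule dsym)
      ultimately have "d (p i' 0) (g ?jl) \<le> d (p i' 0) (p i' t) + d (p ?il t) (p i' t) + d (p ?il t) (g ?jl)"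
        by linarith
      moreover have "d (p i' 0) (p i' t) + d (p ?il t) (g ?jl) < Al + (mr - s)/2"
        by (rule lin2[OF mvi gdl]) simp
      ultimately show ?thesis using lin_aux[OF w _ _ Al_ub] by blast
    next
      case False
      then obtain k where k: "k \<in> {1..n}" "l < k" "i' = ist k"
        and wk: "ereal (W ?il ?jl) + mu l \<le> ereal (W ?il (jst k))" using kk by blast
      have w: "W ?il ?jl + ml \<le> d (p ?il 0) (g (jst k))" using wk ml Wd by simp
      have "1 \<le> l" "l \<le> k" using l k by auto
      then have AkAl: "Ak k \<le> ereal Al" using Ak_mono[of l k] unfolding Al by blast
      obtain Akr where Akr: "Ak k = ereal Akr" using real_of[OF AkAl Ak_lb[OF k(1)]] by blast
      have Akr_le: "Akr \<le> Al" using AkAl unfolding Akr by simp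
      have gdk: "d (p (ist k) t) (g (jst k)) < Akr - min (a t) Akr + (mr - s)/2"
      proof -
        have "ereal (d (p (ist k) t) (g (jst k))) < Ak k - min (ereal (a t)) (Ak k) + (\<mu> - ereal s) / 2"
          by (rule goal_dist[rule_format, OF k(1) tl])
        then show ?thesis unfolding Akr c by (simp add: ereal_min_real del: ereal_min)
      qed
      have mm: "min (a t) Al + (Akr - min (a t) Akr) \<le> Al" using Akr_le by (simp add: min_def)
      have "d (p ?il 0) (g (jst k)) \<le> d (p ?il 0) (p ?il t) + d (p ?il t) (g (jst k))" by (rule dtri)
      moreover have "d (p ?il t) (g (jst k)) \<le> d (p ?il t) (p i' t) + d (p i' t) (g (jst k))" by (rule dtri)
      ultimately have tri: "d (p ?il 0) (g (jst k)) \<le> d (p ?il 0) (p ?il t) + d (p ?il t) (p i' t) + d (p i' t) (g (jst k))"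
        by linarith
      have gd': "d (p i' t) (g (jst k)) < Akr - min (a t) Akr + (mr - s)/2" using gdk k(3) by simp
      have sm: "d (p ?il 0) (p ?il t) + d (p i' t) (g (jst k)) < Al + (mr - s)/2"
        by (rule lin2[OF mvl gd' mm])
      show ?thesis by (rule lin_aux[OF w tri sm Al_ub])
    qed
  qed
  have "Abar k0 \<subseteq> Ag" unfolding Abar_def by auto
  then have ik0A: "ist k0 \<in> Ag" using istA[OF k0] by blast
  have i0A: "i0 \<in> Ag" "i0 \<noteq> ist k0" using i0 by auto
  have ssle: "ss (ist k0) i0 \<le> s" using s_ge ik0A i0A(1) i0A(2)[symmetric] by blast
  have "d (p (ist k0) t) (p i0 t) > s"
  proof (cases "i0 \<in> ist ` {1..n}")
    case True
    then obtain m where m: "m \<in> {1..n}" "i0 = ist m" by blast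
    have "m \<noteq> k0" using m i0A by auto
    then consider "k0 < m" | "m < k0" by linarith
    then show ?thesis
    proof cases
      case 1
      have "Abar m \<subseteq> Abar k0" using Abar_mono[of k0 m] 1 by simp
      then have "i0 \<in> Abar k0" using istA[OF m(1)] m(2) by blast
      then show ?thesis using pair[OF k0 _ i0A(2)] by blast
    next
      case 2
      have "Abar k0 \<subseteq> Abar m" using Abar_mono[of m k0] 2 by simp
      then have "ist k0 \<in> Abar m" using istA[OF k0] by blast
      moreover have "ist k0 \<noteq> ist m" using i0A m by auto
      ultimately have "d (p (ist m) t) (p (ist k0) t) > s" using pair[OF m(1)] by blast
      then show ?thesis using m(2) dsym[of "p (ist m) t" "p (ist k0) t"] by simp
    qed
  next
    case False
    have "ist ` {1..<k0} \<subseteq> ist ` {1..n}" using k0 by auto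
    then have "i0 \<notin> ist ` {1..<k0}" using False by blast
    then have "i0 \<in> Abar k0" using i0A(1) Abar_def by simp
    then show ?thesis using pair[OF k0 _ i0A(2)] by blast
  qed
  then show "d (p (ist k0) t) (p i0 t) > ss (ist k0) i0" using ssle by linarith
qed
end
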